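(* For all $a\in\mathbb{R}$ and $y>0$, $$\frac{\Gamma(a,y)}{\Gamma(a-1,y)}>y.$$
   Context: $\Gamma(a,y)=\int_y^{\infty} t^{a-1}e^{-t}\,dt$ is the upper incomplete gamma function, defined for all real $a$ when $y>0$. *)

theory Defs
  imports "HOL-Analysis.Analysis"
begin

definition upper_inc_Gamma :: "real \<Rightarrow> real \<Rightarrow> real" where
  "upper_inc_Gamma a y = (LBINT t:{y..}. t powr (a - 1) * exp (- t))"

end

theory Submission
  imports Defs
begin

lemma integrable_powr_exp:
  fixes b y :: real
  assumes y: "y > 0"
  shows "set_integrable lborel {y..} (\<lambda>t. t powr b * exp (- t))"
proof -
  define c where "c = \<bar>b\<bar>"
  have c0: "c \<ge> 0" "b \<le> c" unfolding c_def by auto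
  have "((\<lambda>t. t powr ((c+1) - 1) / exp t) has_integral Gamma (c+1)) {0..}"
    by (rule Gamma_integral_real) (use c0 in auto)
  hence "(\<lambda>t. t powr c / exp t) integrable_on {0..}" by (auto simp: integrable_on_def)
  hence "(\<lambda>t. t powr c / exp t) absolutely_integrable_on {0..}"
    by (rule nonnegative_absolutely_integrable_1) auto
  hence "set_integrable lebesgue {0..} (\<lambda>t. t powr c / exp t)" by simp
  hence "set_integrable lborel {0..} (\<lambda>t. t powr c / exp t)"
    unfolding set_integrable_def
    by (subst (asm) integrable_completion) auto
  hence "set_integrable lborel {y..} (\<lambda>t. t powr c / exp t)"
    by (rule set_integrable_subset) (use y in auto)
  hence I: "set_integrable lborel {y..} (\<lambda>t. y powr (b - c) * (t powr c / exp t))"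
    by (rule set_integrable_mult_right)
  show ?thesis
  proof (rule set_integrable_bound[OF I])
    show "set_borel_measurable lborel {y..} (\<lambda>t. t powr b * exp (- t))"
      unfolding set_borel_measurable_def by measurable
    show "AE x in lborel. x \<in> {y..} \<longrightarrow> norm (x powr b * exp (- x)) \<le> norm (y powr (b - c) * (x powr c / exp x))"
    proof (rule AE_I2, rule impI)
      fix x assume x: "x \<in> {y..}"
      hence xp: "x > 0" using y by auto
      have "x powr b = x powr (b - c) * x powr c" by (simp add: powr_add[symmetric])
      also have "x powr (b - c) \<le> y powr (b - c)"
        using x y c0 by (intro powr_mono2') auto
      hence "x powr (b - c) * x powr c \<le> y powr (b - c) * x powr c"
        by (intro mult_right_mono) auto
      finally have "x powr b \<le> y powr (b - c) * x powr c" .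
      thus "norm (x powr b * exp (- x)) \<le> norm (y powr (b - c) * (x powr c / exp x))"
        using xp by (simp add: exp_minus field_simps)
    qed
  qed
qed

lemma set_integral_pos_Ici:
  fixes f :: "real \<Rightarrow> real" and y :: real
  assumes int: "set_integrable lborel {y..} f"
    and nn: "\<And>t. t \<ge> y \<Longrightarrow> f t \<ge> 0" and pos: "\<And>t. t > y \<Longrightarrow> f t > 0"
  shows "(LBINT t:{y..}. f t) > 0"
proof -
  let ?g = "\<lambda>x. indicator {y..} x *\<^sub>R f x"
  have gi: "integrable lborel ?g" using int unfolding set_integrable_def .
  have gnn: "AE x in lborel. 0 \<le> ?g x" by (rule AE_I2) (auto simp: indicator_def nn)
  have ge: "(LBINT t:{y..}. f t) \<ge> 0"
    unfolding set_lebesgue_integral_def using gnn gi by (simp add: integral_nonneg_AE)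
  moreover have "(LBINT t:{y..}. f t) \<noteq> 0"
  proof
    assume "(LBINT t:{y..}. f t) = 0"
    hence "AE x in lborel. ?g x = 0"
      unfolding set_lebesgue_integral_def using integral_nonneg_eq_0_iff_AE[OF gi gnn] by simp
    hence "AE x in lborel. x \<notin> {y<..<y+1}"
      by eventually_elim (use pos in \<open>fastforce simp: indicator_def split: if_splits\<close>)
    hence "emeasure lborel {y<..<y+1} = 0"
      by (subst AE_iff_measurable[symmetric, where P="\<lambda>x. x \<notin> {y<..<y+1}"]) auto
    thus False by simp
  qed
  ultimately show ?thesis by simp
qed

lemma powr_split: "(t::real) > 0 \<Longrightarrow> t powr (a - 1) = t * t powr (a - 1 - 1)"
proof -
  assume tp: "t > 0"
  have "t powr (a - 1) = t powr (1 + (a - 1 - 1))" by simp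
  also have "\<dots> = t powr 1 * t powr (a - 1 - 1)" by (rule powr_add)
  also have "\<dots> = t * t powr (a - 1 - 1)" using tp by simp
  finally show ?thesis .
qed

theorem proposition5:
  fixes a y :: real
  assumes "y > 0"
  shows "upper_inc_Gamma a y / upper_inc_Gamma (a - 1) y > y"
proof -
  have I1: "set_integrable lborel {y..} (\<lambda>t. t powr (a - 1) * exp (- t))"
    by (rule integrable_powr_exp[OF assms])
  have I2: "set_integrable lborel {y..} (\<lambda>t. t powr (a - 1 - 1) * exp (- t))"
    by (rule integrable_powr_exp[OF assms])
  have den: "upper_inc_Gamma (a - 1) y > 0"
    unfolding upper_inc_Gamma_def
    by (rule set_integral_pos_Ici[OF I2]) (use assms in auto)
  have I3: "set_integrable lborel {y..} (\<lambda>t. y * (t powr (a - 1 - 1) * exp (- t)))"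
    by (rule set_integrable_mult_right[OF I2])
  have "(LBINT t:{y..}. t powr (a - 1) * exp (- t) - y * (t powr (a - 1 - 1) * exp (- t))) > 0"
  proof (rule set_integral_pos_Ici[OF set_integral_diff(1)[OF I1 I3]])
    fix t assume t: "t > y"
    hence tp: "t > 0" using assms by auto
    have "t powr (a - 1) = t * t powr (a - 1 - 1)"
      using tp by (rule powr_split)
    moreover have "y * t powr (a - 1 - 1) < t * t powr (a - 1 - 1)"
      using t tp by (intro mult_strict_right_mono) auto
    ultimately show "t powr (a - 1) * exp (- t) - y * (t powr (a - 1 - 1) * exp (- t)) > 0"
      by (simp add: algebra_simps)
  next
    fix t assume t: "t \<ge> y"
    hence tp: "t > 0" using assms by auto
    have "t powr (a - 1) = t * t powr (a - 1 - 1)"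
      using tp by (rule powr_split)
    moreover have "y * t powr (a - 1 - 1) \<le> t * t powr (a - 1 - 1)"
      using t tp by (intro mult_right_mono) auto
    ultimately show "t powr (a - 1) * exp (- t) - y * (t powr (a - 1 - 1) * exp (- t)) \<ge> 0"
      by (simp add: algebra_simps)
  qed
  also have "(LBINT t:{y..}. t powr (a - 1) * exp (- t) - y * (t powr (a - 1 - 1) * exp (- t)))
     = upper_inc_Gamma a y - y * upper_inc_Gamma (a - 1) y"
    unfolding upper_inc_Gamma_def set_integral_diff(2)[OF I1 I3] set_integral_mult_right ..
  finally have "upper_inc_Gamma a y - y * upper_inc_Gamma (a - 1) y > 0" .
  thus ?thesis using den by (simp add: field_simps)
qed

end
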